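(* There is an absolute constant $c>0$ with the following property. Let $\sigma>0$ and let $F$ be an entire function of exponential type at most $\sigma$ whose restriction to $\mathbb{R}$ is integrable, with $F(0)\ge 1$ and $L=\int_{-\infty}^\infty|F(x)|\,dx$. If $\omega\in\mathbb{C}$ satisfies $F(\omega)=0$, then \[ 1\le c\,L\,\sigma^{2}\,|\omega|\cosh\bigl(\sigma\,\mathrm{Im}(\omega)\bigr). \]
   Context: An entire function $F$ has exponential type at most $\sigma$ if for each $\epsilon>0$ there is $C_\epsilon$ with $|F(z)|\le C_\epsilon e^{\sigma(1+\epsilon)|z|}$ for all $z\in\mathbb{C}$. *)

theory Defs
  imports "HOL-Complex_Analysis.Complex_Analysis"
begin

definition exp_type_at_most :: "(complex \<Rightarrow> complex) \<Rightarrow> real \<Rightarrow> bool" where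
  "exp_type_at_most F \<sigma> \<longleftrightarrow>
     (\<forall>\<epsilon>>0. \<exists>C. \<forall>z. norm (F z) \<le> C * exp (\<sigma> * (1 + \<epsilon>) * norm z))"

end

theory Submission
  imports Defs "HOL-Complex_Analysis.Complex_Analysis"
begin


lemma exp_quad_small:
  fixes A B \<eta> :: real
  assumes "\<eta> > 0"
  shows "\<exists>R0. \<forall>r\<ge>R0. A * exp (B*r - \<eta>*r^2) < \<eta>"
proof (intro exI allI impI)
  fix r assume r: "r \<ge> max 1 (max ((\<bar>B\<bar> + 1)/\<eta>) (\<bar>A\<bar>/\<eta> + 1))"
  have r1: "r \<ge> 1" and r2: "(\<bar>B\<bar> + 1)/\<eta> \<le> r" and r3: "\<bar>A\<bar>/\<eta> + 1 \<le> r" using r by auto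
  have "\<bar>B\<bar> + 1 \<le> \<eta> * r" using r2 assms by (simp add: pos_divide_le_eq mult.commute)
  hence "B - \<eta> * r \<le> -1" by linarith
  hence "r * (B - \<eta> * r) \<le> r * (-1)" using r1 by (intro mult_left_mono) auto
  hence e: "B*r - \<eta>*r^2 \<le> - r" by (simp add: power2_eq_square algebra_simps)
  have "A * exp (B*r - \<eta>*r^2) \<le> \<bar>A\<bar> * exp (B*r - \<eta>*r^2)"
    by (intro mult_right_mono) auto
  also have "\<dots> \<le> \<bar>A\<bar> * exp (- r)"
    using e by (intro mult_left_mono) auto
  also have "\<dots> \<le> \<bar>A\<bar> / (1 + r)"
  proof -
    have "1 + r \<le> exp r" by (rule exp_ge_add_one_self)
    hence "exp (- r) \<le> 1 / (1 + r)" using r1 by (simp add: exp_minus field_simps)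
    thus ?thesis by (simp add: mult_left_mono divide_inverse)
  qed
  also have "\<dots> < \<eta>"
  proof -
    have "\<bar>A\<bar>/\<eta> < r" using r3 by linarith
    hence "\<bar>A\<bar> < r * \<eta>" using assms by (simp add: pos_divide_less_eq)
    hence "\<bar>A\<bar> < \<eta> * (1 + r)" using assms by (simp add: algebra_simps)
    thus ?thesis using r1 by (simp add: divide_less_eq mult.commute)
  qed
  finally show "A * exp (B*r - \<eta>*r^2) < \<eta>" .
qed


lemma maxmod_region:
  fixes f :: "complex \<Rightarrow> complex"
  assumes "open S" "bounded S" "S \<subseteq> T" "closed T"
    "f holomorphic_on S" "continuous_on T f"
    "\<And>z. z \<in> T \<Longrightarrow> z \<notin> S \<Longrightarrow> norm (f z) \<le> B"
    "\<xi> \<in> S"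
  shows "norm (f \<xi>) \<le> B"
proof (rule maximum_modulus_frontier[of f S])
  have cl: "closure S \<subseteq> T" using assms by (simp add: closure_minimal)
  show "f holomorphic_on interior S" using assms by (simp add: interior_open)
  show "continuous_on (closure S) f" using assms(6) cl continuous_on_subset by blast
  show "bounded S" by fact
  show "\<xi> \<in> S" by fact
  fix z assume "z \<in> frontier S"
  then have "z \<in> closure S" "z \<notin> S" using assms(1) by (auto simp: frontier_def interior_open)
  then show "norm (f z) \<le> B" using assms(7) cl by blast
qed

lemma le_lim_right0:
  fixes f :: "real \<Rightarrow> real"
  assumes "\<And>\<eta>. 0 < \<eta> \<Longrightarrow> a \<le> f \<eta>" "(f \<longlongrightarrow> l) (at_right 0)"
  shows "a \<le> l"
proof (rule tendsto_lowerbound[OF assms(2)])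
  show "\<forall>\<^sub>F x in at_right 0. a \<le> f x"
    using eventually_at_right_less[of 0] by (rule eventually_mono) (use assms(1) in auto)
qed simp

lemma sector_quad:
  fixes w :: complex and s m :: real
  assumes "s = 1 \<or> s = -1" "0 \<le> s * Im w" "s * Im w \<le> m * Re w"
  shows "norm w ^ 2 \<le> Re ((1 - \<i> * s * m) * w^2)"
proof -
  have s2: "s * s = 1" using assms(1) by auto
  have "Re ((1 - \<i> * s * m) * w^2) = Re w^2 - Im w^2 + 2 * s * m * Re w * Im w"
    by (simp add: power2_eq_square algebra_simps)
  moreover have "norm w ^ 2 = Re w ^2 + Im w^2" by (simp add: cmod_power2)
  moreover have "(s * Im w) * (m * Re w - s * Im w) \<ge> 0" using assms by simp
  moreover have s3: "\<And>t. s * (s * t) = t" using s2 by (metis mult.assoc mult_1)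
  ultimately show ?thesis by (simp add: power2_eq_square algebra_simps s3)
qed

lemma PL_sector:
  fixes W :: "complex \<Rightarrow> complex" and m s M A B :: real and z :: complex
  assumes hol: "W holomorphic_on UNIV" and m: "m > 0" and s: "s = 1 \<or> s = -1"
   and bx: "\<And>x::real. x \<ge> 0 \<Longrightarrow> norm (W (of_real x)) \<le> M"
   and bt: "\<And>t::real. t \<ge> 0 \<Longrightarrow> norm (W (of_real t * (1 + \<i> * s * m))) \<le> M"
   and gr: "\<And>z. norm (W z) \<le> A * exp (B * norm z)"
   and z1: "0 \<le> s * Im z" and z2: "s * Im z \<le> m * Re z"
  shows "norm (W z) \<le> M"
proof -
  have s3: "\<And>t. s * (s * t) = t" using s by auto
  have sabs: "\<And>t. \<bar>s * t\<bar> = \<bar>t\<bar>" using s by (auto simp: abs_mult)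
  have M0: "0 \<le> M"
  proof -
    have "norm (W (of_real 0)) \<le> M" by (rule bx) simp
    then show ?thesis using norm_ge_zero order_trans by blast
  qed
  have onray: "w = of_real (Re w) * (1 + \<i> * s * m)" if "s * Im w = m * Re w" for w
  proof -
    have "s * (s * Im w) = s * (m * Re w)" using that by simp
    then have "Im w = s * m * Re w" using s3 by (simp add: mult.assoc)
    then show ?thesis by (simp add: complex_eq_iff)
  qed
  have onreal: "w = of_real (Re w)" if "s * Im w = 0" for w
    using that s by (auto simp: complex_eq_iff)
  show ?thesis
  proof (cases "s * Im z = 0 \<or> s * Im z = m * Re z")
    case True
    then show ?thesis
    proof
      assume h: "s * Im z = 0"
      have "Re z \<ge> 0" using z2 h m by (simp add: zero_le_mult_iff)
      then show ?thesis using bx[of "Re z"] onreal[OF h] by simp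
    next
      assume h: "s * Im z = m * Re z"
      have "Re z \<ge> 0" using z1 h m by (simp add: zero_le_mult_iff)
      then show ?thesis using bt[of "Re z"] onray[OF h] by simp
    qed
  next
    case False
    hence zi: "0 < s * Im z" "s * Im z < m * Re z" using z1 z2 by (simp_all only: de_Morgan_disj) linarith+
    define K where "K = Re ((1 - \<i> * s * m) * z^2)"
    have holV: "(\<lambda>w. W w * exp (- (of_real \<eta> * ((1 - \<i> * s * m) * w^2)))) holomorphic_on UNIV" for \<eta>
      by (intro holomorphic_intros hol)
    have main: "norm (W z) \<le> (M + \<eta>) * exp (\<eta> * K)" if \<eta>: "\<eta> > 0" for \<eta>
    proof -
      define V where "V = (\<lambda>w. W w * exp (- (of_real \<eta> * ((1 - \<i> * s * m) * w^2))))"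
      have nV: "norm (V w) = norm (W w) * exp (- (\<eta> * Re ((1 - \<i> * s * m) * w^2)))" for w
        by (simp add: V_def norm_mult norm_exp_eq_Re)
      obtain R0 where R0: "\<And>r. r \<ge> R0 \<Longrightarrow> A * exp (B*r - \<eta>*r^2) < \<eta>"
        using exp_quad_small[OF \<eta>, of A B] by blast
      define R where "R = max R0 (Re z + 1)"
      define S where "S = {w. 0 < s * Im w \<and> s * Im w < m * Re w \<and> Re w < R}"
      define T where "T = {w. 0 \<le> s * Im w \<and> s * Im w \<le> m * Re w \<and> Re w \<le> R}"
      have "norm (V z) \<le> M + \<eta>"
      proof (rule maxmod_region[where S=S and T=T and f=V and \<xi>=z])
        show "open S" unfolding S_def by (intro open_Collect_conj open_Collect_less continuous_intros)
        show "closed T" unfolding T_def by (intro closed_Collect_conj closed_Collect_le continuous_intros)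
        show "S \<subseteq> T" by (auto simp: S_def T_def)
        show "bounded S"
        proof -
          have "norm w \<le> R + m * R" if "w \<in> S" for w
          proof -
            have h: "0 < s * Im w" "s * Im w < m * Re w" "Re w < R" using that by (auto simp: S_def)
            have "0 < m * Re w" using h by linarith
            hence r0: "0 < Re w" using m by (simp add: zero_less_mult_iff)
            have "\<bar>Im w\<bar> = s * Im w" using sabs[of "Im w"] h(1) by simp
            hence a: "0 < Re w" "Re w < R" "\<bar>Im w\<bar> < m * Re w" using h r0 by auto
            have "m * Re w \<le> m * R" using a m by (simp add: mult_left_mono less_imp_le)
            hence "\<bar>Im w\<bar> \<le> m * R" using a by linarith
            then show ?thesis using cmod_le[of w] a by linarith
          qed
          then show ?thesis unfolding bounded_iff by blast
        qed
        show "V holomorphic_on S" unfolding V_def using holV holomorphic_on_subset by blast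
        show "continuous_on T V" unfolding V_def using holV holomorphic_on_imp_continuous_on continuous_on_subset by blast
        show "z \<in> S" using zi by (auto simp: S_def R_def)
        fix w assume wT: "w \<in> T" and wS: "w \<notin> S"
        then have w1: "0 \<le> s * Im w" "s * Im w \<le> m * Re w" "Re w \<le> R" by (auto simp: T_def)
        have wc: "s * Im w = 0 \<or> s * Im w = m * Re w \<or> Re w = R" using wT wS by (auto simp: T_def S_def)
        have q: "norm w ^ 2 \<le> Re ((1 - \<i> * s * m) * w^2)" using sector_quad[OF s w1(1,2)] .
        have e1: "exp (- (\<eta> * Re ((1 - \<i> * s * m) * w^2))) \<le> 1"
          proof -
          have "0 \<le> \<eta> * Re ((1 - \<i> * s * m) * w^2)"
            using q \<eta> by (meson mult_nonneg_nonneg less_imp_le order_trans zero_le_power2)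
          then show ?thesis by simp
        qed
        have e2: "exp (- (\<eta> * Re ((1 - \<i> * s * m) * w^2))) \<le> exp (- (\<eta> * norm w ^ 2))"
          using q \<eta> by (simp add: mult_left_mono)
        show "norm (V w) \<le> M + \<eta>"
        proof (cases "Re w = R")
          case True
          have "R0 \<le> norm w" using True abs_Re_le_cmod[of w] R_def by linarith
          hence "A * exp (B * norm w - \<eta> * norm w ^ 2) < \<eta>" by (rule R0)
          moreover have "norm (V w) \<le> A * exp (B * norm w) * exp (- (\<eta> * norm w ^ 2))"
            unfolding nV by (rule mult_mono[OF gr e2]) (use gr[of w] norm_ge_zero[of "W w"] in linarith, simp)
          moreover have "A * exp (B * norm w) * exp (- (\<eta> * norm w ^ 2)) = A * exp (B * norm w - \<eta> * norm w ^ 2)"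
            by (simp add: mult.assoc exp_add[symmetric])
          ultimately show ?thesis using M0 by linarith
        next
          case False
          hence "s * Im w = 0 \<or> s * Im w = m * Re w" using wc by auto
          hence "norm (W w) \<le> M"
          proof
            assume h: "s * Im w = 0"
            have "Re w \<ge> 0" using w1 h m by (simp add: zero_le_mult_iff)
            then show ?thesis using bx[of "Re w"] onreal[OF h] by simp
          next
            assume h: "s * Im w = m * Re w"
            have "Re w \<ge> 0" using w1 h m by (simp add: zero_le_mult_iff)
            then show ?thesis using bt[of "Re w"] onray[OF h] by simp
          qed
          then have "norm (V w) \<le> M * 1" unfolding nV by (rule mult_mono[OF _ e1]) (use M0 in auto)
          then show ?thesis using \<eta> by simp
        qed
      qed
      moreover have "norm (W z) = norm (V z) * exp (\<eta> * K)"
        unfolding nV K_def by (simp add: mult.assoc exp_add[symmetric])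
      ultimately show ?thesis by (simp add: mult_right_mono)
    qed
    have lim: "((\<lambda>\<eta>. (M + \<eta>) * exp (\<eta> * K)) \<longlongrightarrow> (M + 0) * exp (0 * K)) (at_right 0)"
      by (intro tendsto_intros)
    show ?thesis using le_lim_right0[OF main lim] by simp
  qed
qed



lemma den_bounds:
  fixes \<eta> :: real and w :: complex
  assumes "\<eta> > 0" "Im w \<ge> 0"
  shows "1 \<le> norm (1 - \<i> * of_real \<eta> * w)" "\<eta> * norm w \<le> norm (1 - \<i> * of_real \<eta> * w)"
proof -
  have e: "norm (1 - \<i> * of_real \<eta> * w) ^ 2 = (1 + \<eta> * Im w)^2 + (\<eta> * Re w)^2"
    unfolding cmod_power2 by (simp add: power2_eq_square algebra_simps)
  have p: "0 \<le> \<eta> * Im w" using assms by simp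
  have sq: "(1 + \<eta> * Im w)^2 = 1 + (2 * (\<eta> * Im w) + (\<eta> * Im w)^2)"
    by (simp add: power2_eq_square algebra_simps)
  have "0 \<le> 2 * (\<eta> * Im w) + (\<eta> * Im w)^2" using p by simp
  moreover have "0 \<le> (\<eta> * Re w)^2" by simp
  ultimately have "1 ^ 2 \<le> norm (1 - \<i> * of_real \<eta> * w) ^ 2" unfolding e sq power_one by linarith
  then show "1 \<le> norm (1 - \<i> * of_real \<eta> * w)" by (rule power2_le_imp_le) simp
  have "(\<eta> * norm w) ^ 2 = (\<eta> * Im w)^2 + (\<eta> * Re w)^2"
    by (simp add: power_mult_distrib cmod_power2 algebra_simps)
  hence "(\<eta> * norm w) ^ 2 \<le> norm (1 - \<i> * of_real \<eta> * w) ^ 2" unfolding e using p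
    by (simp add: power2_eq_square algebra_simps)
  then show "\<eta> * norm w \<le> norm (1 - \<i> * of_real \<eta> * w)" by (rule power2_le_imp_le) simp
qed

lemma PL_half:
  fixes H :: "complex \<Rightarrow> complex" and L M :: real
  assumes hol: "H holomorphic_on UNIV"
    and bR: "\<And>x::real. norm (H (of_real x)) \<le> L"
    and bM: "\<And>z. Im z \<ge> 0 \<Longrightarrow> norm (H z) \<le> M"
    and z: "Im z \<ge> 0"
  shows "norm (H z) \<le> L"
proof (cases "Im z = 0")
  case True
  then have "z = of_real (Re z)" by (simp add: complex_eq_iff)
  then show ?thesis using bR by metis
next
  case False
  hence zp: "Im z > 0" using z by simp
  have M0: "0 \<le> M"
  proof -
    have "norm (H 0) \<le> M" by (rule bM) simp
    then show ?thesis using norm_ge_zero[of "H 0"] by linarith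
  qed
  have L0: "0 \<le> L" using bR[of 0] norm_ge_zero[of "H 0"] by (simp del: norm_ge_zero)
  have main: "norm (H z) \<le> (L + \<eta>) * norm (1 - \<i> * of_real \<eta> * z)" if \<eta>: "\<eta> > 0" for \<eta>
  proof -
    define V where "V = (\<lambda>w. H w / (1 - \<i> * of_real \<eta> * w))"
    define R where "R = max (\<bar>Re z\<bar> + Im z + 1) (M / (\<eta> * \<eta>) + 1)"
    define S where "S = {w. -R < Re w \<and> Re w < R \<and> 0 < Im w \<and> Im w < R}"
    define T where "T = {w. -R \<le> Re w \<and> Re w \<le> R \<and> 0 \<le> Im w \<and> Im w \<le> R}"
    have R0: "R > 0" unfolding R_def using zp by linarith
    have dnz: "1 - \<i> * of_real \<eta> * w \<noteq> 0" if "Im w \<ge> 0" for w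
      using den_bounds(1)[OF \<eta> that] by auto
    have holT: "V holomorphic_on T" unfolding V_def
    proof (rule holomorphic_on_divide)
      show "H holomorphic_on T" using hol holomorphic_on_subset by blast
      show "(\<lambda>w. 1 - \<i> * of_real \<eta> * w) holomorphic_on T" by (intro holomorphic_intros)
      show "\<And>w. w \<in> T \<Longrightarrow> 1 - \<i> * of_real \<eta> * w \<noteq> 0" using dnz unfolding T_def by blast
    qed
    have "norm (V z) \<le> L + \<eta>"
    proof (rule maxmod_region[where S=S and T=T and f=V and \<xi>=z])
      show "open S" unfolding S_def by (intro open_Collect_conj open_Collect_less continuous_intros)
      show "closed T" unfolding T_def by (intro closed_Collect_conj closed_Collect_le continuous_intros)
      show "S \<subseteq> T" by (auto simp: S_def T_def)
      show "bounded S"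
      proof -
        have "norm w \<le> R + R" if "w \<in> S" for w
          using that cmod_le[of w] by (auto simp: S_def)
        then show ?thesis unfolding bounded_iff by blast
      qed
      show "V holomorphic_on S" using holT \<open>S \<subseteq> T\<close> holomorphic_on_subset by blast
      show "continuous_on T V" using holT holomorphic_on_imp_continuous_on by blast
      show "z \<in> S" using zp by (auto simp: S_def R_def)
      fix w assume wT: "w \<in> T" and wS: "w \<notin> S"
      have w0: "Im w \<ge> 0" using wT by (auto simp: T_def)
      have nV: "norm (V w) = norm (H w) / norm (1 - \<i> * of_real \<eta> * w)"
        by (simp add: V_def norm_divide)
      show "norm (V w) \<le> L + \<eta>"
      proof (cases "Im w = 0")
        case True
        then have "w = of_real (Re w)" by (simp add: complex_eq_iff)
        then have "norm (H w) \<le> L" using bR by metis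
        moreover have "1 \<le> norm (1 - \<i> * of_real \<eta> * w)" by (rule den_bounds(1)[OF \<eta> w0])
        ultimately have "norm (V w) \<le> L / 1" unfolding nV
          by (intro frac_le L0) auto
        then show ?thesis using \<eta> by simp
      next
        case False
        then have "\<bar>Re w\<bar> = R \<or> Im w = R" using wT wS by (auto simp: T_def S_def)
        then have wR: "R \<le> norm w" using abs_Re_le_cmod[of w] abs_Im_le_cmod[of w] w0 by auto
        have d: "\<eta> * R \<le> norm (1 - \<i> * of_real \<eta> * w)"
        proof -
          have "\<eta> * R \<le> \<eta> * norm w" using wR \<eta> by (simp add: mult_left_mono)
          then show ?thesis using den_bounds(2)[OF \<eta> w0] by linarith
        qed
        have "norm (V w) \<le> M / (\<eta> * R)" unfolding nV
          by (rule frac_le[OF M0 bM[OF w0] _ d]) (use \<eta> R0 in simp)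
        also have "\<dots> \<le> \<eta>"
        proof -
          have "M / (\<eta> * \<eta>) \<le> R" unfolding R_def by linarith
          then have "M \<le> R * (\<eta> * \<eta>)" using \<eta> pos_divide_le_eq[of "\<eta> * \<eta>" M R] by simp
          then have "M \<le> \<eta> * (\<eta> * R)" by (simp add: algebra_simps)
          then show ?thesis using \<eta> R0 pos_divide_le_eq[of "\<eta> * R" M \<eta>] by simp
        qed
        finally show ?thesis using L0 by simp
      qed
    qed
    moreover have "norm (H z) = norm (V z) * norm (1 - \<i> * of_real \<eta> * z)"
      using dnz[of z] zp by (simp add: V_def norm_divide)
    ultimately show ?thesis by (simp add: mult_right_mono)
  qed
  have lim: "((\<lambda>\<eta>. (L + \<eta>) * norm (1 - \<i> * of_real \<eta> * z)) \<longlongrightarrow>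
      (L + 0) * norm (1 - \<i> * of_real 0 * z)) (at_right 0)"
    by (intro tendsto_intros)
  show ?thesis using le_lim_right0[OF main lim] by simp
qed



lemma upper_bound:
  fixes G :: "complex \<Rightarrow> complex" and \<sigma> L :: real
  assumes hol: "G holomorphic_on UNIV" and \<sigma>: "\<sigma> > 0"
    and bR: "\<And>x::real. norm (G (of_real x)) \<le> L"
    and ty: "\<And>\<delta>. \<delta> > 0 \<Longrightarrow> \<exists>C. \<forall>z. norm (G z) \<le> C * exp (\<sigma> * (1+\<delta>) * norm z)"
    and z: "Im z \<ge> 0"
  shows "norm (G z) \<le> L * exp (\<sigma> * Im z)"
proof -
  have main: "norm (G z) \<le> L * exp ((\<sigma> + e) * Im z)" if e: "e > 0" for e
  proof -
    define \<tau> where "\<tau> = \<sigma> + e"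
    define \<delta> where "\<delta> = e / (2*\<sigma>)"
    have \<delta>0: "\<delta> > 0" using e \<sigma> by (simp add: \<delta>_def)
    define s0 where "s0 = \<sigma> * (1 + \<delta>)"
    have s0e: "s0 = \<sigma> + e/2" using \<sigma> by (simp add: s0_def \<delta>_def field_simps)
    obtain C where C: "\<And>w. norm (G w) \<le> C * exp (s0 * norm w)" using ty[OF \<delta>0] unfolding s0_def by auto
    have C0: "0 \<le> C" using C[of 0] norm_ge_zero[of "G 0"] by (simp del: norm_ge_zero)
    define m where "m = s0 / (\<tau> - s0)"
    have ts: "\<tau> - s0 = e/2" using s0e by (simp add: \<tau>_def)
    have s0p: "s0 > 0" using s0e \<sigma> e by simp
    have m0: "m > 0" using s0p e by (simp add: m_def ts)
    have key: "s0 * (1 + 1/m) = \<tau>" using s0p e by (simp add: m_def ts field_simps) (simp add: s0e \<tau>_def algebra_simps)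
    define H where "H = (\<lambda>w. G w * exp (\<i> * of_real \<tau> * w))"
    have nH: "norm (H w) = norm (G w) * exp (- (\<tau> * Im w))" for w
      by (simp add: H_def norm_mult norm_exp_eq_Re)
    have holH: "H holomorphic_on UNIV" unfolding H_def by (intro holomorphic_intros hol)
    have mid: "norm (H w) \<le> C" if mw: "m * \<bar>Re w\<bar> \<le> Im w" for w
    proof -
      have "0 \<le> m * \<bar>Re w\<bar>" using m0 by simp
      hence i0: "0 \<le> Im w" using mw by linarith
      have r: "\<bar>Re w\<bar> \<le> Im w / m" using mw m0 by (simp add: pos_le_divide_eq mult.commute)
      have "norm w \<le> Im w / m + Im w" using cmod_le[of w] r i0 by linarith
      hence "s0 * norm w \<le> s0 * (Im w / m + Im w)" using s0p by (simp add: mult_left_mono)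
      also have "\<dots> = Im w * (s0 * (1 + 1/m))" by (simp add: algebra_simps)
      also have "\<dots> = \<tau> * Im w" using key by simp
      finally have le: "s0 * norm w \<le> \<tau> * Im w" .
      have "norm (H w) \<le> C * exp (s0 * norm w) * exp (- (\<tau> * Im w))"
        unfolding nH by (rule mult_right_mono[OF C]) simp
      also have "\<dots> = C * exp (s0 * norm w - \<tau> * Im w)" by (simp add: mult.assoc exp_add[symmetric])
      also have "\<dots> \<le> C * 1" using le C0 by (intro mult_left_mono) auto
      finally show ?thesis by simp
    qed
    define M where "M = max L C"
    have gr: "norm (H w) \<le> C * exp ((s0 + \<tau>) * norm w)" for w
    proof -
      have "- Im w \<le> norm w" using abs_Im_le_cmod[of w] by linarith
      hence "\<tau> * (- Im w) \<le> \<tau> * norm w" using \<sigma> e by (intro mult_left_mono) (auto simp: \<tau>_def)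
      hence a: "- (\<tau> * Im w) \<le> \<tau> * norm w" by simp
      have "norm (H w) \<le> C * exp (s0 * norm w) * exp (\<tau> * norm w)"
        unfolding nH by (rule mult_mono[OF C]) (use a C0 in auto)
      then show ?thesis by (simp add: mult.assoc exp_add[symmetric] algebra_simps)
    qed
    have bnd: "norm (H w) \<le> M" if w0: "Im w \<ge> 0" for w
    proof (cases "m * \<bar>Re w\<bar> \<le> Im w")
      case True then show ?thesis using mid[OF True] by (simp add: M_def)
    next
      case False
      show ?thesis
      proof (cases "Re w \<ge> 0")
        case True
        have "norm (H w) \<le> M"
        proof (rule PL_sector[where W=H and s=1 and m=m and A=C and B="s0+\<tau>"])
          show "H holomorphic_on UNIV" by (rule holH)
          show "m > 0" by (rule m0)
          show "(1::real) = 1 \<or> (1::real) = -1" by simp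
          show "norm (H (of_real x)) \<le> M" if "x \<ge> 0" for x
            using bR[of x] by (simp add: nH M_def)
          show "norm (H (of_real t * (1 + \<i> * of_real 1 * of_real m))) \<le> M" if t: "t \<ge> 0" for t
          proof -
            have h: "m * \<bar>Re (of_real t * (1 + \<i> * of_real 1 * of_real m))\<bar> \<le> Im (of_real t * (1 + \<i> * of_real 1 * of_real m))"
              using t by simp
            show ?thesis using mid[OF h] by (simp add: M_def)
          qed
          show "\<And>z. norm (H z) \<le> C * exp ((s0 + \<tau>) * norm z)" by (rule gr)
          show "0 \<le> 1 * Im w" using w0 by simp
          show "1 * Im w \<le> m * Re w" using False True by simp
        qed
        then show ?thesis .
      next
        case neg: False
        have holH': "(\<lambda>w. H (- w)) holomorphic_on UNIV"
        proof -
          have "(H \<circ> uminus) holomorphic_on UNIV"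
            by (rule holomorphic_on_compose) (auto intro: holomorphic_intros holomorphic_on_subset[OF holH])
          then show ?thesis by (simp add: o_def)
        qed
        have "norm ((\<lambda>w. H (- w)) (- w)) \<le> M"
        proof (rule PL_sector[where W="\<lambda>w. H (- w)" and s="-1" and m=m and A=C and B="s0+\<tau>"])
          show "(\<lambda>w. H (- w)) holomorphic_on UNIV" by (rule holH')
          show "m > 0" by (rule m0)
          show "(-1::real) = 1 \<or> (-1::real) = -1" by simp
          show "norm (H (- of_real x)) \<le> M" if "x \<ge> 0" for x
            using bR[of "-x"] by (simp add: nH M_def)
          show "norm (H (- (of_real t * (1 + \<i> * of_real (-1) * of_real m)))) \<le> M" if t: "t \<ge> 0" for t
          proof -
            have h: "m * \<bar>Re (- (of_real t * (1 + \<i> * of_real (-1) * of_real m)))\<bar> \<le> Im (- (of_real t * (1 + \<i> * of_real (-1) * of_real m)))"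
              using t by simp
            show ?thesis using mid[OF h] by (simp add: M_def)
          qed
          show "\<And>z. norm (H (- z)) \<le> C * exp ((s0 + \<tau>) * norm z)" using gr by (metis norm_minus_cancel)
          show "0 \<le> -1 * Im (- w)" using w0 by simp
          show "-1 * Im (- w) \<le> m * Re (- w)" using False neg by simp
        qed
        then show ?thesis by simp
      qed
    qed
    have bRH: "norm (H (of_real x)) \<le> L" for x using bR[of x] by (simp add: nH)
    have "norm (H z) \<le> L" by (rule PL_half[OF holH bRH bnd z])
    then have "norm (G z) * exp (- (\<tau> * Im z)) * exp (\<tau> * Im z) \<le> L * exp (\<tau> * Im z)"
      unfolding nH by (simp add: mult_right_mono)
    then show ?thesis by (simp add: mult.assoc exp_add[symmetric] \<tau>_def)
  qed
  have lim: "((\<lambda>e. L * exp ((\<sigma> + e) * Im z)) \<longlongrightarrow> L * exp ((\<sigma> + 0) * Im z)) (at_right 0)"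
    by (intro tendsto_intros)
  show ?thesis using le_lim_right0[OF main lim] by simp
qed

lemma full_bound:
  fixes G :: "complex \<Rightarrow> complex" and \<sigma> L :: real
  assumes hol: "G holomorphic_on UNIV" and \<sigma>: "\<sigma> > 0"
    and bR: "\<And>x::real. norm (G (of_real x)) \<le> L"
    and ty: "\<And>\<delta>. \<delta> > 0 \<Longrightarrow> \<exists>C. \<forall>z. norm (G z) \<le> C * exp (\<sigma> * (1+\<delta>) * norm z)"
  shows "norm (G z) \<le> L * exp (\<sigma> * \<bar>Im z\<bar>)"
proof (cases "Im z \<ge> 0")
  case True
  then show ?thesis using upper_bound[OF hol \<sigma> bR ty True] by simp
next
  case neg: False
  have holG': "(\<lambda>w. G (- w)) holomorphic_on UNIV"
  proof -
    have "(G \<circ> uminus) holomorphic_on UNIV"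
      by (rule holomorphic_on_compose) (auto intro: holomorphic_intros holomorphic_on_subset[OF hol])
    then show ?thesis by (simp add: o_def)
  qed
  have bR': "norm (G (- of_real x)) \<le> L" for x using bR[of "-x"] by simp
  have ty': "\<exists>C. \<forall>z. norm (G (- z)) \<le> C * exp (\<sigma> * (1+\<delta>) * norm z)" if "\<delta> > 0" for \<delta>
    using ty[OF that] by (metis norm_minus_cancel)
  have nz: "Im (- z) \<ge> 0" using neg by simp
  have "norm (G (- (- z))) \<le> L * exp (\<sigma> * Im (- z))"
    using upper_bound[where G="\<lambda>w. G (- w)", OF holG' \<sigma> bR' ty' nz] by simp
  then show ?thesis using neg by simp
qed



lemma G_real_bound:
  fixes F G :: "complex \<Rightarrow> complex"
  assumes dG: "\<And>z. (G has_field_derivative F z) (at z)" and G0: "G 0 = 0"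
    and ai: "(\<lambda>x::real. F (complex_of_real x)) absolutely_integrable_on UNIV"
  shows "norm (G (of_real x)) \<le> integral UNIV (\<lambda>x::real. norm (F (complex_of_real x)))"
proof -
  have i1: "(\<lambda>x::real. F (complex_of_real x)) integrable_on UNIV"
    and i2: "(\<lambda>x::real. norm (F (complex_of_real x))) integrable_on UNIV"
    using ai unfolding absolutely_integrable_on_def by auto
  have seg: "norm (G (of_real b) - G (of_real a)) \<le> integral UNIV (\<lambda>x::real. norm (F (complex_of_real x)))"
    if ab: "a \<le> b" for a b
  proof -
    have "((\<lambda>t. F (of_real t)) has_integral ((G \<circ> of_real) b - (G \<circ> of_real) a)) {a..b}"
    proof (rule fundamental_theorem_of_calculus[OF ab])
      fix t assume "t \<in> {a..b}"
      show "((G \<circ> of_real) has_vector_derivative F (of_real t)) (at t within {a..b})"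
        by (rule has_complex_derivative_imp_has_vector_derivative)
          (rule has_field_derivative_at_within[OF dG])
    qed
    then have hi: "integral {a..b} (\<lambda>t. F (of_real t)) = G (of_real b) - G (of_real a)"
      by (simp add: integral_unique)
    have "norm (integral {a..b} (\<lambda>t. F (of_real t))) \<le> integral {a..b} (\<lambda>t. norm (F (of_real t)))"
      by (rule integral_norm_bound_integral)
        (auto intro: integrable_on_subinterval[OF i1] integrable_on_subinterval[OF i2])
    also have "\<dots> \<le> integral UNIV (\<lambda>x::real. norm (F (complex_of_real x)))"
      by (rule integral_subset_le) (auto intro: integrable_on_subinterval[OF i2] i2)
    finally show ?thesis using hi by simp
  qed
  show ?thesis
  proof (cases "x \<ge> 0")
    case True
    then show ?thesis using seg[of 0 x] G0 by simp
  next
    case False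
    then have "norm (G (of_real 0) - G (of_real x)) \<le> integral UNIV (\<lambda>x::real. norm (F (complex_of_real x)))"
      by (intro seg) simp
    then show ?thesis using G0 by (simp add: norm_minus_commute)
  qed
qed

lemma G_type:
  fixes F G :: "complex \<Rightarrow> complex" and \<sigma> \<delta> :: real
  assumes dG: "\<And>z. (G has_field_derivative F z) (at z)" and G0: "G 0 = 0"
    and ty: "exp_type_at_most F \<sigma>" and \<sigma>: "\<sigma> > 0" and \<delta>: "\<delta> > 0"
  shows "\<exists>C. \<forall>z. norm (G z) \<le> C * exp (\<sigma> * (1+\<delta>) * norm z)"
proof -
  obtain C where C: "\<And>z. norm (F z) \<le> C * exp (\<sigma> * (1 + \<delta>/2) * norm z)"
    using ty \<delta> unfolding exp_type_at_most_def by (metis half_gt_zero)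
  have C0: "0 \<le> C" using C[of 0] norm_ge_zero[of "F 0"] by (simp del: norm_ge_zero)
  define a where "a = \<sigma> * (1 + \<delta>/2)"
  define b where "b = \<sigma> * \<delta> / 2"
  have b0: "b > 0" using \<sigma> \<delta> by (simp add: b_def)
  have ab: "a + b = \<sigma> * (1 + \<delta>)" by (simp add: a_def b_def algebra_simps)
  show ?thesis
  proof (intro exI allI)
    fix z
    have "norm (G z - G 0) \<le> (C * exp (a * norm z)) * norm (z - 0)"
    proof (rule field_differentiable_bound[where S="closed_segment 0 z" and f'=F])
      show "convex (closed_segment 0 z)" by simp
      show "(G has_field_derivative F u) (at u within closed_segment 0 z)" for u
        by (rule has_field_derivative_at_within[OF dG])
      show "norm (F u) \<le> C * exp (a * norm z)" if "u \<in> closed_segment 0 z" for u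
      proof -
        have "dist u 0 \<le> dist 0 z" using dist_in_closed_segment[OF that] by simp
        hence "norm u \<le> norm z" by simp
        hence "a * norm u \<le> a * norm z" using \<sigma> \<delta> by (intro mult_left_mono) (auto simp: a_def)
        hence "C * exp (a * norm u) \<le> C * exp (a * norm z)" using C0 by (intro mult_left_mono) auto
        then show ?thesis using C[of u] a_def by simp
      qed
    qed auto
    then have g1: "norm (G z) \<le> C * exp (a * norm z) * norm z" using G0 by simp
    have "b * norm z \<le> exp (b * norm z)"
      using exp_ge_add_one_self[of "b * norm z"] by linarith
    hence nz: "norm z \<le> exp (b * norm z) / b" using b0 by (simp add: pos_le_divide_eq mult.commute)
    have "C * exp (a * norm z) * norm z \<le> C * exp (a * norm z) * (exp (b * norm z) / b)"
      using nz C0 by (intro mult_left_mono) auto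
    also have "\<dots> = (C / b) * exp ((a + b) * norm z)"
      by (simp add: distrib_right exp_add field_simps)
    finally show "norm (G z) \<le> (C / b) * exp (\<sigma> * (1+\<delta>) * norm z)" using g1 ab by simp
  qed
qed

theorem corollary12:
  "\<exists>c>0. \<forall>(\<sigma>::real) (F::complex \<Rightarrow> complex) (\<omega>::complex).
     \<sigma> > 0 \<longrightarrow> F holomorphic_on UNIV \<longrightarrow> exp_type_at_most F \<sigma> \<longrightarrow>
     (\<lambda>x::real. F (complex_of_real x)) absolutely_integrable_on UNIV \<longrightarrow>
     Im (F 0) = 0 \<longrightarrow> Re (F 0) \<ge> 1 \<longrightarrow> F \<omega> = 0 \<longrightarrow>
     1 \<le> c * integral UNIV (\<lambda>x::real. norm (F (complex_of_real x))) * \<sigma>\<^sup>2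
            * norm \<omega> * cosh (\<sigma> * Im \<omega>)"
proof (intro exI[of _ "4 * exp 1"] conjI allI impI)
  show "0 < 4 * exp (1::real)" by simp
  fix \<sigma> :: real and F :: "complex \<Rightarrow> complex" and \<omega> :: complex
  assume \<sigma>: "\<sigma> > 0" and hol: "F holomorphic_on UNIV" and ty: "exp_type_at_most F \<sigma>"
    and ai: "(\<lambda>x::real. F (complex_of_real x)) absolutely_integrable_on UNIV"
    and im0: "Im (F 0) = 0" and re0: "Re (F 0) \<ge> 1" and zw: "F \<omega> = 0"
  define L where "L = integral UNIV (\<lambda>x::real. norm (F (complex_of_real x)))"
  have L0: "0 \<le> L" unfolding L_def
    by (rule integral_nonneg) (use ai in \<open>auto simp: absolutely_integrable_on_def\<close>)
  obtain g where g: "\<And>x. x \<in> UNIV \<Longrightarrow> (g has_field_derivative F x) (at x within UNIV)"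
    using holomorphic_convex_primitive'[of UNIV F] hol by auto
  define G where "G = (\<lambda>z. g z - g 0)"
  have dG: "(G has_field_derivative F z) (at z)" for z
    unfolding G_def using g[of z] by (auto intro!: derivative_eq_intros)
  have G0: "G 0 = 0" by (simp add: G_def)
  have holG: "G holomorphic_on UNIV" using dG by (auto simp: holomorphic_on_open)
  have derG: "deriv G = F" using dG by (auto intro!: ext DERIV_imp_deriv)
  have bR: "norm (G (of_real x)) \<le> L" for x
    unfolding L_def by (rule G_real_bound[OF dG G0 ai])
  have tyG: "\<exists>C. \<forall>z. norm (G z) \<le> C * exp (\<sigma> * (1+\<delta>) * norm z)" if "\<delta> > 0" for \<delta>
    by (rule G_type[OF dG G0 ty \<sigma> that])
  have Gb: "norm (G z) \<le> L * exp (\<sigma> * \<bar>Im z\<bar>)" for z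
    by (rule full_bound[OF holG \<sigma> bR tyG])
  have dFb: "norm (deriv F \<xi>) \<le> 2 * (L * exp (\<sigma> * \<bar>Im \<xi>\<bar> + 1)) * \<sigma>^2" for \<xi>
  proof -
    have "norm ((deriv ^^ 2) G \<xi>) \<le> fact 2 * (L * exp (\<sigma> * \<bar>Im \<xi>\<bar> + 1)) / (1/\<sigma>) ^ 2"
    proof (rule Cauchy_inequality)
      show "G holomorphic_on ball \<xi> (1/\<sigma>)" using holG holomorphic_on_subset by blast
      show "continuous_on (cball \<xi> (1/\<sigma>)) G"
        using holG holomorphic_on_imp_continuous_on continuous_on_subset by blast
      show "0 < 1/\<sigma>" using \<sigma> by simp
      fix x assume x: "norm (\<xi> - x) = 1/\<sigma>"
      have "\<bar>Im x\<bar> \<le> \<bar>Im \<xi>\<bar> + \<bar>Im (\<xi> - x)\<bar>" by simp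
      also have "\<bar>Im (\<xi> - x)\<bar> \<le> 1/\<sigma>" using abs_Im_le_cmod[of "\<xi> - x"] x by simp
      finally have "\<sigma> * \<bar>Im x\<bar> \<le> \<sigma> * (\<bar>Im \<xi>\<bar> + 1/\<sigma>)"
        using \<sigma> by (intro mult_left_mono) auto
      also have "\<dots> = \<sigma> * \<bar>Im \<xi>\<bar> + 1" using \<sigma> by (simp add: algebra_simps)
      finally have "L * exp (\<sigma> * \<bar>Im x\<bar>) \<le> L * exp (\<sigma> * \<bar>Im \<xi>\<bar> + 1)"
        using L0 by (intro mult_left_mono) auto
      then show "norm (G x) \<le> L * exp (\<sigma> * \<bar>Im \<xi>\<bar> + 1)" using Gb[of x] by linarith
    qed
    moreover have "(deriv ^^ 2) G \<xi> = deriv F \<xi>" by (simp add: numeral_2_eq_2 derG)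
    ultimately show ?thesis using \<sigma> by (simp add: power_divide field_simps)
  qed
  define Bd where "Bd = 2 * (L * exp (\<sigma> * \<bar>Im \<omega>\<bar> + 1)) * \<sigma>^2"
  have "norm (F 0 - F \<omega>) \<le> Bd * norm (0 - \<omega>)"
  proof (rule field_differentiable_bound[where S="closed_segment 0 \<omega>" and f'="deriv F"])
    show "convex (closed_segment 0 \<omega>)" by simp
    show "(F has_field_derivative deriv F u) (at u within closed_segment 0 \<omega>)" for u
      by (rule holomorphic_derivI[OF hol]) auto
    show "norm (deriv F u) \<le> Bd" if "u \<in> closed_segment 0 \<omega>" for u
    proof -
      from in_segment(1)[THEN iffD1, OF that]
      obtain t where t0: "0 \<le> t" "t \<le> 1" "u = (1 - t) *\<^sub>R 0 + t *\<^sub>R \<omega>"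
        by blast
      then have t: "0 \<le> t" "t \<le> 1" "u = t *\<^sub>R \<omega>" by auto
      have iu: "Im u = t * Im \<omega>" using t(3) by simp
      have "\<bar>Im u\<bar> = t * \<bar>Im \<omega>\<bar>" unfolding iu using t(1) by (simp add: abs_mult)
      also have "\<dots> \<le> 1 * \<bar>Im \<omega>\<bar>" using t(2) by (rule mult_right_mono) simp
      finally have "\<bar>Im u\<bar> \<le> \<bar>Im \<omega>\<bar>" by simp
      hence "\<sigma> * \<bar>Im u\<bar> \<le> \<sigma> * \<bar>Im \<omega>\<bar>" using \<sigma> by (simp add: mult_left_mono)
      hence "exp (\<sigma> * \<bar>Im u\<bar> + 1) \<le> exp (\<sigma> * \<bar>Im \<omega>\<bar> + 1)" by simp
      hence "L * exp (\<sigma> * \<bar>Im u\<bar> + 1) \<le> L * exp (\<sigma> * \<bar>Im \<omega>\<bar> + 1)"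
        using L0 by (rule mult_left_mono)
      hence "2 * (L * exp (\<sigma> * \<bar>Im u\<bar> + 1)) * \<sigma>^2 \<le> Bd"
        unfolding Bd_def by (simp add: mult_right_mono)
      then show ?thesis using dFb[of u] by linarith
    qed
  qed auto
  then have b1: "norm (F 0) \<le> Bd * norm \<omega>" using zw by simp
  have "1 \<le> norm (F 0)" using re0 complex_Re_le_cmod[of "F 0"] by linarith
  also have "\<dots> \<le> Bd * norm \<omega>" by (rule b1)
  also have "\<dots> \<le> 4 * exp 1 * L * \<sigma>\<^sup>2 * norm \<omega> * cosh (\<sigma> * Im \<omega>)"
  proof -
    have ec: "exp (\<sigma> * \<bar>Im \<omega>\<bar>) \<le> 2 * cosh (\<sigma> * Im \<omega>)"
    proof -
      have "exp (\<sigma> * \<bar>Im \<omega>\<bar>) \<le> exp (\<sigma> * Im \<omega>) + exp (- (\<sigma> * Im \<omega>))"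
      proof (cases "Im \<omega> \<ge> 0")
        case True
        then have "\<sigma> * \<bar>Im \<omega>\<bar> = \<sigma> * Im \<omega>" by simp
        then have "exp (\<sigma> * \<bar>Im \<omega>\<bar>) = exp (\<sigma> * Im \<omega>)" by simp
        then show ?thesis using exp_gt_zero[of "- (\<sigma> * Im \<omega>)"] by linarith
      next
        case neg: False
        then have "\<sigma> * \<bar>Im \<omega>\<bar> = - (\<sigma> * Im \<omega>)" by simp
        then have "exp (\<sigma> * \<bar>Im \<omega>\<bar>) = exp (- (\<sigma> * Im \<omega>))" by simp
        then show ?thesis using exp_gt_zero[of "\<sigma> * Im \<omega>"] by linarith
      qed
      then show ?thesis unfolding cosh_def by simp
    qed
    have "Bd * norm \<omega> = 2 * exp 1 * L * \<sigma>^2 * norm \<omega> * exp (\<sigma> * \<bar>Im \<omega>\<bar>)"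
      by (simp add: Bd_def exp_add algebra_simps)
    also have "\<dots> \<le> 2 * exp 1 * L * \<sigma>^2 * norm \<omega> * (2 * cosh (\<sigma> * Im \<omega>))"
      by (rule mult_left_mono[OF ec]) (use L0 \<sigma> in simp)
    finally show ?thesis by (simp add: algebra_simps)
  qed
  finally show "1 \<le> 4 * exp 1 * integral UNIV (\<lambda>x::real. norm (F (complex_of_real x))) * \<sigma>\<^sup>2
            * norm \<omega> * cosh (\<sigma> * Im \<omega>)" unfolding L_def .
qed

end
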